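(* Let $r\ge 1$ be an integer. Define $(B^{(r)}(n,k))_{n\ge0,\,k\in\mathbb{Z}}$ by $B^{(r)}(0,0)=1$, $B^{(r)}(0,k)=0$ for $k\neq0$, $B^{(r)}(n,k)=0$ for $k<0$, and for $n\ge1$ and all $k$, \[ B^{(r)}(n,k)=\bigl(rn-k+1-r\bigr)B^{(r)}(n-1,k-1)+(k+1)B^{(r)}(n-1,k). \] Then for every $n\ge 1$ and every integer $k$, $B^{(r)}(n,k)$ equals the number of increasing plane full $(r+1)$-ary trees with $n$ internal nodes in which exactly $k+1$ leaves are cadets.
   Context: An increasing plane full $(r+1)$-ary tree with $n$ internal nodes is a rooted tree in which each internal node has exactly $r+1$ children, linearly ordered (first child, ..., $(r+1)$-st child), each node being either internal or a leaf; the $n$ internal nodes carry the distinct labels $1,\dots,n$, and labels increase along every path from the root (so the root is labelled $1$). Equivalently, such trees are built by starting from a single leaf and, at step $i=1,\dots,n$, replacing one chosen leaf by an internal node labelled $i$ having $r+1$ new ordered leaf children. A leaf is a cadet if it is the last ($(r+1)$-st) child of its parent. (The numbers $B^{(r)}(n,k)$ are the numbers of Stirling $r$-permutations of $[n]$ with $k$ descents studied by X. He.) *)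

theory Defs
  imports Main
begin

datatype ltree = Leaf | Node nat "ltree list"

fun labs :: "ltree \<Rightarrow> nat list" where
  "labs Leaf = []"
| "labs (Node a ts) = a # concat (map labs ts)"

fun full :: "nat \<Rightarrow> ltree \<Rightarrow> bool" where
  "full r Leaf = True"
| "full r (Node a ts) = (length ts = r + 1 \<and> (\<forall>t\<in>set ts. full r t))"

fun increasing :: "ltree \<Rightarrow> bool" where
  "increasing Leaf = True"
| "increasing (Node a ts) = (\<forall>t\<in>set ts. (\<forall>b\<in>set (labs t). a < b) \<and> increasing t)"

definition inc_tree :: "nat \<Rightarrow> nat \<Rightarrow> ltree \<Rightarrow> bool" where
  "inc_tree r n t \<longleftrightarrow> full r t \<and> increasing t \<and> distinct (labs t) \<and> set (labs t) = {1..n}"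

fun cadets :: "ltree \<Rightarrow> nat" where
  "cadets Leaf = 0"
| "cadets (Node a ts) = (if ts \<noteq> [] \<and> last ts = Leaf then 1 else 0) + sum_list (map cadets ts)"

fun B :: "nat \<Rightarrow> nat \<Rightarrow> int \<Rightarrow> int" where
  "B r 0 k = (if k = 0 then 1 else 0)"
| "B r (Suc n) k = (if k < 0 then 0 else
      (int r * int (Suc n) - k + 1 - int r) * B r n (k - 1) + (k + 1) * B r n k)"

end

theory Submission
  imports Defs "HOL-Library.Multiset"
begin

fun sub :: "nat list \<Rightarrow> ltree \<Rightarrow> ltree option" where
  "sub [] t = Some t"
| "sub (j#p) Leaf = None"
| "sub (j#p) (Node a ts) = (if j < length ts then sub p (ts!j) else None)"

fun repl :: "nat list \<Rightarrow> ltree \<Rightarrow> ltree \<Rightarrow> ltree" where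
  "repl [] u t = u"
| "repl (j#p) u Leaf = Leaf"
| "repl (j#p) u (Node a ts) = Node a (ts[j := repl p u (ts!j)])"

fun del :: "nat \<Rightarrow> ltree \<Rightarrow> ltree" where
  "del x Leaf = Leaf"
| "del x (Node a ts) = (if a = x then Leaf else Node a (map (del x) ts))"

definition leafpos :: "ltree \<Rightarrow> nat list set" where
  "leafpos t = {p. sub p t = Some Leaf}"

definition cadpos :: "nat \<Rightarrow> ltree \<Rightarrow> nat list set" where
  "cadpos r t = {p. sub p t = Some Leaf \<and> p \<noteq> [] \<and> last p = r}"

lemma sum_list_upd:
  "j < length xs \<Longrightarrow> sum_list (xs[j:=x]) + xs!j = sum_list xs + (x::'a::comm_monoid_add)"
  by (induction xs arbitrary: j) (auto split: nat.splits simp: add_ac)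

lemma sub_repl_same: "sub p t = Some s \<Longrightarrow> sub p (repl p u t) = Some u"
  by (induction p arbitrary: t; case_tac t; auto split: if_splits)

lemma repl_sub_id: "sub p t = Some s \<Longrightarrow> repl p s t = t"
  by (induction p arbitrary: t; case_tac t; auto split: if_splits)

lemma repl_repl: "repl p u (repl p v t) = repl p u t"
proof (induction p arbitrary: t)
  case (Cons j p)
  then show ?case by (cases t; cases "j < length (case t of Node a ts \<Rightarrow> ts)") (auto simp: list_update_beyond not_less)
qed simp

lemma sub_repl_other:
  "sub p t = Some Leaf \<Longrightarrow> sub q t = Some Leaf \<Longrightarrow> p \<noteq> q \<Longrightarrow> sub q (repl p u t) = Some Leaf"
proof (induction p arbitrary: q t)
  case Nil
  then show ?case by (cases q) auto
next
  case (Cons j p)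
  then obtain a ts where t: "t = Node a ts" by (cases t) auto
  show ?case
  proof (cases q)
    case Nil
    then show ?thesis using Cons t by auto
  next
    case (Cons i q')
    then show ?thesis using Cons.prems Cons.IH t
      by (cases "i = j") (auto split: if_splits)
  qed
qed

lemma full_repl: "full r t \<Longrightarrow> full r u \<Longrightarrow> full r (repl p u t)"
proof (induction p arbitrary: t)
  case (Cons j p)
  show ?case
  proof (cases t)
    case (Node a ts)
    show ?thesis
    proof (cases "j < length ts")
      case True
      then have "full r (repl p u (ts!j))" using Cons Node by simp
      then show ?thesis using Cons.prems Node True by (auto dest: set_update_subset_insert[THEN subsetD])
    qed (use Cons.prems Node in \<open>auto simp: list_update_beyond\<close>)
  qed simp
qed simp

lemma full_sub: "sub p t = Some s \<Longrightarrow> full r t \<Longrightarrow> full r s"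
  by (induction p arbitrary: t; case_tac t; auto split: if_splits)

lemma inc_sub: "sub p t = Some s \<Longrightarrow> increasing t \<Longrightarrow> increasing s"
  by (induction p arbitrary: t; case_tac t; auto split: if_splits)

lemma labs_sub: "sub p t = Some s \<Longrightarrow> set (labs s) \<subseteq> set (labs t)"
  by (induction p arbitrary: t; case_tac t; fastforce split: if_splits)

lemma labs_repl: "set (labs (repl p u t)) \<subseteq> set (labs t) \<union> set (labs u)"
proof (induction p arbitrary: t)
  case Nil
  then show ?case by auto
next
  case (Cons j p)
  show ?case
  proof (cases t)
    case (Node a ts)
    have "set (labs x) \<subseteq> set (labs t) \<union> set (labs u)" if "x \<in> set (ts[j := repl p u (ts!j)])" for x
    proof -
      from set_update_subset_insert[THEN subsetD, OF that]
      have "x = repl p u (ts!j) \<or> x \<in> set ts" by auto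
      then show ?thesis
      proof
        assume x: "x = repl p u (ts!j)"
        show ?thesis
        proof (cases "j < length ts")
          case True
          then have "ts!j \<in> set ts" by simp
          then show ?thesis using Cons.IH[of "ts!j"] x Node by fastforce
        next
          case False
          then have "ts[j := repl p u (ts!j)] = ts" by (simp add: list_update_beyond)
          with that have "x \<in> set ts" by simp
          then show ?thesis using Node by auto
        qed
      next
        assume "x \<in> set ts" then show ?thesis using Node by auto
      qed
    qed
    then show ?thesis using Node by auto
  qed auto
qed

lemma inc_repl:
  "increasing t \<Longrightarrow> increasing u \<Longrightarrow> \<forall>a\<in>set (labs t). \<forall>b\<in>set (labs u). a < b
   \<Longrightarrow> increasing (repl p u t)"
proof (induction p arbitrary: t)
  case Nil
  then show ?case by auto
next
  case (Cons j p)
  show ?case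
  proof (cases t)
    case (Node a ts)
    show ?thesis
    proof (cases "j < length ts")
      case False
      then show ?thesis using Node Cons.prems by (simp add: list_update_beyond)
    next
      case True
      let ?y = "repl p u (ts!j)"
      have tj: "ts!j \<in> set ts" using True by simp
      have iy: "increasing ?y"
        using Cons.IH[of "ts!j"] Cons.prems Node tj by fastforce
      have ly: "\<forall>b\<in>set (labs ?y). a < b"
        using labs_repl[of p u "ts!j"] Cons.prems Node tj by fastforce
      have "\<forall>x\<in>set (ts[j := ?y]). (\<forall>b\<in>set (labs x). a < b) \<and> increasing x"
      proof
        fix x assume "x \<in> set (ts[j := ?y])"
        from set_update_subset_insert[THEN subsetD, OF this]
        have "x = ?y \<or> x \<in> set ts" by auto
        then show "(\<forall>b\<in>set (labs x). a < b) \<and> increasing x"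
          using iy ly Cons.prems Node by auto
      qed
      then show ?thesis using Node by simp
    qed
  qed auto
qed

lemma mset_labs_Node: "mset (labs (Node a ts)) = add_mset a (sum_list (map (\<lambda>t. mset (labs t)) ts))"
  by (simp add: mset_concat comp_def)

lemma mset_repl:
  "sub p t = Some s \<Longrightarrow> mset (labs (repl p u t)) + mset (labs s) = mset (labs t) + mset (labs u)"
proof (induction p arbitrary: t)
  case Nil
  then show ?case by (simp add: add.commute)
next
  case (Cons j p)
  then obtain a ts where t: "t = Node a ts" and j: "j < length ts" and sj: "sub p (ts!j) = Some s"
    by (cases t) (auto split: if_splits)
  let ?f = "\<lambda>t. mset (labs t)"
  let ?y = "repl p u (ts!j)"
  have IH: "?f ?y + ?f s = ?f (ts!j) + ?f u" using Cons.IH[OF sj] .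
  have U: "sum_list (map ?f (ts[j := ?y])) + ?f (ts!j) = sum_list (map ?f ts) + ?f ?y"
    using sum_list_upd[of j "map ?f ts" "?f ?y"] j by (simp add: map_update)
  have "sum_list (map ?f (ts[j := ?y])) + ?f s + ?f (ts!j) = sum_list (map ?f ts) + ?f u + ?f (ts!j)"
    using U IH by (metis add.assoc add.commute)
  then have "sum_list (map ?f (ts[j := ?y])) + ?f s = sum_list (map ?f ts) + ?f u" by simp
  moreover have "mset (labs (repl (j#p) u t)) = add_mset a (sum_list (map ?f (ts[j := ?y])))"
    by (simp only: t repl.simps mset_labs_Node)
  moreover have "mset (labs t) = add_mset a (sum_list (map ?f ts))"
    by (simp only: t mset_labs_Node)
  ultimately show ?case by simp
qed

lemma exists_pos: "x \<in> set (labs t) \<Longrightarrow> \<exists>p us. sub p t = Some (Node x us)"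
proof (induction t)
  case Leaf
  then show ?case by simp
next
  case (Node a ts)
  show ?case
  proof (cases "x = a")
    case True
    then show ?thesis by (intro exI[of _ "[]"] exI[of _ ts]) simp
  next
    case False
    then obtain t' where "t' \<in> set ts" "x \<in> set (labs t')" using Node.prems by auto
    then obtain j where j: "j < length ts" "ts!j = t'" by (auto simp: in_set_conv_nth)
    from Node.IH[OF \<open>t' \<in> set ts\<close> \<open>x \<in> set (labs t')\<close>] obtain p us where "sub p t' = Some (Node x us)" by blast
    then show ?thesis using j by (intro exI[of _ "j#p"]) auto
  qed
qed

lemma del_notin: "x \<notin> set (labs t) \<Longrightarrow> del x t = t"
  by (induction t) (auto intro: map_idI)

lemma del_repl: "sub p t = Some Leaf \<Longrightarrow> x \<notin> set (labs t) \<Longrightarrow> del x (repl p (Node x ls) t) = t"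
proof (induction p arbitrary: t)
  case Nil
  then show ?case by simp
next
  case (Cons j p)
  then obtain a ts where t: "t = Node a ts" and j: "j < length ts" and sj: "sub p (ts!j) = Some Leaf"
    by (cases t) (auto split: if_splits)
  have tj: "ts!j \<in> set ts" using j by simp
  have ax: "a \<noteq> x" using Cons.prems t by auto
  have m: "map (del x) ts = ts" using Cons.prems t by (auto intro!: map_idI del_notin)
  have y: "del x (repl p (Node x ls) (ts!j)) = ts!j" using Cons.IH[OF sj] Cons.prems t tj by auto
  show ?case using t ax m y j by (simp add: map_update)
qed


lemma leafpos_Node: "leafpos (Node a ts) = (\<Union>j<length ts. Cons j ` leafpos (ts!j))"
proof (rule set_eqI)
  fix p show "p \<in> leafpos (Node a ts) \<longleftrightarrow> p \<in> (\<Union>j<length ts. Cons j ` leafpos (ts!j))"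
    by (cases p) (auto simp: leafpos_def split: if_splits)
qed

lemma cadpos_Node:
  assumes "length ts = Suc r"
  shows "cadpos r (Node a ts) = (\<Union>j<length ts. Cons j ` cadpos r (ts!j)) \<union> (if ts!r = Leaf then {[r]} else {})"
proof (rule set_eqI)
  fix p show "p \<in> cadpos r (Node a ts) \<longleftrightarrow> p \<in> (\<Union>j<length ts. Cons j ` cadpos r (ts!j)) \<union> (if ts!r = Leaf then {[r]} else {})"
  proof (cases p)
    case Nil then show ?thesis by (auto simp: cadpos_def)
  next
    case (Cons j q)
    show ?thesis
    proof (cases q)
      case Nil then show ?thesis using Cons assms by (auto simp: cadpos_def)
    next
      case (Cons i q')
      have 1: "p \<in> (\<Union>j<length ts. Cons j ` cadpos r (ts!j)) \<longleftrightarrow> j < length ts \<and> q \<in> cadpos r (ts!j)"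
        using \<open>p = j # q\<close> by auto
      have 2: "p \<notin> (if ts!r = Leaf then {[r]} else {})" using \<open>p = j # q\<close> Cons by auto
      have 3: "p \<in> cadpos r (Node a ts) \<longleftrightarrow> j < length ts \<and> q \<in> cadpos r (ts!j)"
        using \<open>p = j # q\<close> Cons by (auto simp: cadpos_def)
      show ?thesis using 1 2 3 by blast
    qed
  qed
qed

lemma cadpos_sub: "cadpos r t \<subseteq> leafpos t"
  by (auto simp: cadpos_def leafpos_def)

lemma finite_leafpos: "finite (leafpos t)"
proof (induction t)
  case Leaf
  have "leafpos Leaf = {[]}"
  proof (rule set_eqI)
    fix p show "p \<in> leafpos Leaf \<longleftrightarrow> p \<in> {[]}" by (cases p) (auto simp: leafpos_def)
  qed
  then show ?case by simp
next
  case (Node a ts)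
  then show ?case by (auto simp: leafpos_Node)
qed

lemma finite_cadpos: "finite (cadpos r t)"
  using finite_subset[OF cadpos_sub finite_leafpos] .

lemma leafpos_Leaf: "leafpos Leaf = {[]}"
proof (rule set_eqI)
  fix p show "p \<in> leafpos Leaf \<longleftrightarrow> p \<in> {[]}" by (cases p) (auto simp: leafpos_def)
qed

lemma card_UN_Cons:
  fixes A :: "nat \<Rightarrow> nat list set" and n :: nat
  assumes "\<And>j. finite (A j)"
  shows "card (\<Union>j<n. Cons j ` A j) = (\<Sum>j<n. card (A j))"
proof -
  have "card (\<Union>j<n. Cons j ` A j) = (\<Sum>j<n. card (Cons j ` A j))"
    apply (rule card_UN_disjoint)
    apply simp
    using assms apply simp
    apply auto
    done
  also have "\<dots> = (\<Sum>j<n. card (A j))"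
    by (rule sum.cong) (auto intro: card_image simp: inj_on_def)
  finally show ?thesis .
qed

lemma sum_list_map_nth: "sum_list (map f xs) = (\<Sum>j<length xs. f (xs!j))"
  by (simp add: sum_list_sum_nth atLeast0LessThan)

lemma card_leafpos: "full r t \<Longrightarrow> card (leafpos t) = r * length (labs t) + 1"
proof (induction t)
  case Leaf
  then show ?case by (simp add: leafpos_Leaf)
next
  case (Node a ts)
  have len: "length ts = Suc r" using Node.prems by simp
  have "card (leafpos (Node a ts)) = (\<Sum>j<length ts. card (leafpos (ts!j)))"
    unfolding leafpos_Node by (rule card_UN_Cons) (rule finite_leafpos)
  also have "\<dots> = (\<Sum>j<length ts. r * length (labs (ts!j)) + 1)"
    by (rule sum.cong) (use Node in auto)
  also have "\<dots> = r * (\<Sum>j<length ts. length (labs (ts!j))) + length ts"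
    unfolding sum.distrib by (simp add: sum_distrib_left)
  also have "(\<Sum>j<length ts. length (labs (ts!j))) = sum_list (map (\<lambda>t. length (labs t)) ts)"
    by (simp add: sum_list_map_nth)
  also have "\<dots> = length (concat (map labs ts))" by (simp add: length_concat comp_def)
  finally show ?case using len by simp
qed

lemma card_cadpos: "full r t \<Longrightarrow> card (cadpos r t) = cadets t"
proof (induction t)
  case Leaf
  have "cadpos r Leaf = {}" using cadpos_sub[of r Leaf] by (auto simp: leafpos_Leaf cadpos_def)
  then show ?case by simp
next
  case (Node a ts)
  have len: "length ts = Suc r" using Node.prems by simp
  let ?A = "(\<Union>j<length ts. Cons j ` cadpos r (ts!j))"
  let ?B = "(if ts!r = Leaf then {[r]} else {}) :: nat list set"
  have fA: "finite ?A" by (auto intro: finite_cadpos)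
  have dis: "?A \<inter> ?B = {}" by (auto simp: cadpos_def)
  have "card (cadpos r (Node a ts)) = card ?A + card ?B"
    unfolding cadpos_Node[OF len] by (rule card_Un_disjoint[OF fA _ dis]) simp
  also have "card ?A = (\<Sum>j<length ts. card (cadpos r (ts!j)))"
    by (rule card_UN_Cons) (rule finite_cadpos)
  also have "\<dots> = (\<Sum>j<length ts. cadets (ts!j))"
    by (rule sum.cong) (use Node in auto)
  also have "\<dots> = sum_list (map cadets ts)" by (simp add: sum_list_map_nth)
  also have "card ?B = (if ts \<noteq> [] \<and> last ts = Leaf then 1 else 0)"
  proof -
    have ne: "ts \<noteq> []" using len by auto
    then have "last ts = ts!r" using len by (simp add: last_conv_nth)
    with ne show ?thesis by (cases "ts!r = Leaf") simp_all
  qed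
  finally show ?case by simp
qed

lemma repl_Node_ne: "q \<noteq> [] \<Longrightarrow> t \<noteq> Leaf \<Longrightarrow> repl q u t \<noteq> Leaf"
  by (cases q; cases t) auto

lemma cadets_repl:
  assumes N: "cadets N = 1" "N \<noteq> Leaf"
  shows "full r t \<Longrightarrow> sub p t = Some Leaf \<Longrightarrow>
    cadets (repl p N t) = cadets t + (if p \<in> cadpos r t then 0 else 1)"
proof (induction p arbitrary: t)
  case Nil
  then show ?case using N by (simp add: cadpos_def)
next
  case (Cons j q)
  then obtain a ts where t: "t = Node a ts" and j: "j < length ts" and sj: "sub q (ts!j) = Some Leaf"
    by (cases t) (auto split: if_splits)
  have len: "length ts = Suc r" using Cons.prems t by simp
  have ne: "ts \<noteq> []" using len by auto
  have fj: "full r (ts!j)" using Cons.prems t j by simp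
  let ?y = "repl q N (ts!j)"
  have U: "sum_list (map cadets (ts[j := ?y])) + cadets (ts!j) = sum_list (map cadets ts) + cadets ?y"
    using sum_list_upd[of j "map cadets ts" "cadets ?y"] j by (simp add: map_update)
  have L: "last (ts[j := ?y]) = (if j = r then ?y else last ts)"
    using last_list_update[OF ne] len by simp
  have lastr: "last ts = ts!r" using len ne by (simp add: last_conv_nth)
  have mem: "(j#q \<in> cadpos r t) = ((q = [] \<and> j = r) \<or> (q \<noteq> [] \<and> q \<in> cadpos r (ts!j)))"
    using t j sj by (auto simp: cadpos_def)
  have ct: "cadets t = (if last ts = Leaf then 1 else 0) + sum_list (map cadets ts)"
    using t ne by simp
  have ct': "cadets (repl (j#q) N t) = (if last (ts[j := ?y]) = Leaf then 1 else 0) + sum_list (map cadets (ts[j := ?y]))"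
    using t ne by simp
  show ?case
  proof (cases "q = []")
    case True
    then have tj: "ts!j = Leaf" using sj by simp
    have y: "?y = N" using True by simp
    show ?thesis using U L lastr mem ct ct' tj y N True by (cases "j = r") auto
  next
    case False
    have tjn: "ts!j \<noteq> Leaf" using sj False by (cases q) auto
    have yn: "?y \<noteq> Leaf" using repl_Node_ne[OF False tjn] .
    have IH: "cadets ?y = cadets (ts!j) + (if q \<in> cadpos r (ts!j) then 0 else 1)"
      using Cons.IH[OF fj sj] .
    show ?thesis using U L lastr mem ct ct' tjn yn IH False by (cases "j = r") auto
  qed
qed


definition Nd :: "nat \<Rightarrow> nat \<Rightarrow> ltree" where
  "Nd r x = Node x (replicate (Suc r) Leaf)"

definition T :: "nat \<Rightarrow> nat \<Rightarrow> ltree set" where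
  "T r m = {t. inc_tree r m t}"

lemma Nd_props: "full r (Nd r x)" "increasing (Nd r x)" "labs (Nd r x) = [x]"
  "cadets (Nd r x) = 1" "Nd r x \<noteq> Leaf"
  by (auto simp: Nd_def)

lemma inc_tree_mset:
  "inc_tree r m t \<longleftrightarrow> full r t \<and> increasing t \<and> mset (labs t) = mset [1..<Suc m]"
proof -
  have d: "distinct [1..<Suc m]" and s: "set [1..<Suc m] = {1..m}" by auto
  show ?thesis
  proof
    assume "inc_tree r m t"
    then show "full r t \<and> increasing t \<and> mset (labs t) = mset [1..<Suc m]"
      unfolding inc_tree_def using set_eq_iff_mset_eq_distinct[OF _ d] s by auto
  next
    assume a: "full r t \<and> increasing t \<and> mset (labs t) = mset [1..<Suc m]"
    then have "distinct (labs t)" using mset_eq_imp_distinct_iff d by blast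
    moreover have "set (labs t) = {1..m}" using mset_eq_setD a s by metis
    ultimately show "inc_tree r m t" using a unfolding inc_tree_def by auto
  qed
qed

lemma inc_tree_labs: "inc_tree r m t \<Longrightarrow> set (labs t) = {1..m}"
  by (simp add: inc_tree_def)

lemma inc_tree_len: "inc_tree r m t \<Longrightarrow> length (labs t) = m"
  by (metis inc_tree_mset length_upt diff_Suc_1 mset_eq_length)

lemma fwd:
  assumes "inc_tree r m t" "p \<in> leafpos t"
  shows "inc_tree r (Suc m) (repl p (Nd r (Suc m)) t)"
proof -
  have sp: "sub p t = Some Leaf" using assms(2) by (simp add: leafpos_def)
  have f: "full r (repl p (Nd r (Suc m)) t)"
    using full_repl Nd_props assms(1) by (auto simp: inc_tree_def)
  have i: "increasing (repl p (Nd r (Suc m)) t)"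
    using assms(1) by (intro inc_repl) (auto simp: inc_tree_def Nd_props)
  have "mset (labs (repl p (Nd r (Suc m)) t)) + mset (labs Leaf) = mset (labs t) + mset (labs (Nd r (Suc m)))"
    by (rule mset_repl[OF sp])
  then have "mset (labs (repl p (Nd r (Suc m)) t)) = mset [1..<Suc (Suc m)]"
    using assms(1) by (simp add: inc_tree_mset Nd_props)
  then show ?thesis using f i inc_tree_mset by blast
qed

lemma bwd:
  assumes "inc_tree r (Suc m) t'"
  shows "\<exists>t p. inc_tree r m t \<and> p \<in> leafpos t \<and> t' = repl p (Nd r (Suc m)) t"
proof -
  have "Suc m \<in> set (labs t')" using assms by (simp add: inc_tree_def)
  then obtain p us where sp: "sub p t' = Some (Node (Suc m) us)" using exists_pos by blast
  have fs: "full r (Node (Suc m) us)" using full_sub[OF sp] assms by (simp add: inc_tree_def)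
  have isN: "increasing (Node (Suc m) us)" using inc_sub[OF sp] assms by (simp add: inc_tree_def)
  have ls: "set (labs (Node (Suc m) us)) \<subseteq> {1..Suc m}" using labs_sub[OF sp] assms by (simp add: inc_tree_def)
  have "\<forall>u\<in>set us. u = Leaf"
  proof
    fix u assume u: "u \<in> set us"
    show "u = Leaf"
    proof (cases u)
      case (Node b vs)
      then have "Suc m < b" using isN u by auto
      moreover have "b \<in> set (labs (Node (Suc m) us))" using u Node by force
      then have "b \<in> {1..Suc m}" using ls by blast
      ultimately show ?thesis by simp
    qed simp
  qed
  moreover have "length us = Suc r" using fs by simp
  ultimately have "us = replicate (Suc r) Leaf" by (metis replicate_length_same)
  then have sp': "sub p t' = Some (Nd r (Suc m))" using sp by (simp add: Nd_def)
  define t where "t = repl p Leaf t'"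
  have st: "sub p t = Some Leaf" unfolding t_def by (rule sub_repl_same[OF sp'])
  have tt: "t' = repl p (Nd r (Suc m)) t"
    unfolding t_def repl_repl using repl_sub_id[OF sp'] by simp
  have f: "full r t" unfolding t_def using assms full_repl by (auto simp: inc_tree_def)
  have i: "increasing t" unfolding t_def using assms by (intro inc_repl) (auto simp: inc_tree_def)
  have "mset (labs t) + mset (labs (Nd r (Suc m))) = mset (labs t') + mset (labs Leaf)"
    unfolding t_def by (rule mset_repl[OF sp'])
  then have "mset (labs t) + {#Suc m#} = mset [1..<Suc m] + {#Suc m#}"
    using assms by (simp add: inc_tree_mset Nd_props)
  then have "mset (labs t) = mset [1..<Suc m]" by simp
  then have "inc_tree r m t" using f i inc_tree_mset by blast
  then show ?thesis using st tt by (auto simp: leafpos_def)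
qed

lemma inj_F: "inj_on (\<lambda>(t, p). repl p (Nd r (Suc m)) t) (Sigma (T r m) leafpos)"
proof (rule inj_onI, clarify)
  fix t p t' p'
  assume a: "t \<in> T r m" "p \<in> leafpos t" "t' \<in> T r m" "p' \<in> leafpos t'"
    and e: "repl p (Nd r (Suc m)) t = repl p' (Nd r (Suc m)) t'"
  have n1: "Suc m \<notin> set (labs t)" using a(1) by (auto simp: T_def inc_tree_def)
  have n2: "Suc m \<notin> set (labs t')" using a(3) by (auto simp: T_def inc_tree_def)
  have s1: "sub p t = Some Leaf" and s2: "sub p' t' = Some Leaf" using a by (auto simp: leafpos_def)
  have "t = t'"
    using del_repl[OF s1 n1, of "replicate (Suc r) Leaf"] del_repl[OF s2 n2, of "replicate (Suc r) Leaf"] e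
    by (simp add: Nd_def)
  moreover have "p = p'"
  proof (rule ccontr)
    assume ne: "p \<noteq> p'"
    have "sub p' (repl p (Nd r (Suc m)) t) = Some Leaf"
      using sub_repl_other[OF s1 _ ne] s2 \<open>t = t'\<close> by simp
    moreover have "sub p' (repl p' (Nd r (Suc m)) t') = Some (Nd r (Suc m))"
      using sub_repl_same[OF s2] .
    ultimately show False using e Nd_props(5) by simp
  qed
  ultimately show "t = t' \<and> p = p'" by simp
qed

lemma T0: "T r 0 = {Leaf}"
proof -
  have "inc_tree r 0 t \<longleftrightarrow> t = Leaf" for t
    by (cases t) (auto simp: inc_tree_def)
  then show ?thesis by (auto simp: T_def)
qed

lemma T_Suc: "T r (Suc m) = (\<lambda>(t, p). repl p (Nd r (Suc m)) t) ` Sigma (T r m) leafpos"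
proof
  show "T r (Suc m) \<subseteq> (\<lambda>(t, p). repl p (Nd r (Suc m)) t) ` Sigma (T r m) leafpos"
    using bwd by (fastforce simp: T_def)
  show "(\<lambda>(t, p). repl p (Nd r (Suc m)) t) ` Sigma (T r m) leafpos \<subseteq> T r (Suc m)"
    using fwd by (auto simp: T_def)
qed

lemma finite_T: "finite (T r m)"
proof (induction m)
  case 0 then show ?case by (simp add: T0)
next
  case (Suc m)
  then show ?case unfolding T_Suc by (intro finite_imageI finite_SigmaI finite_leafpos)
qed


definition C :: "nat \<Rightarrow> nat \<Rightarrow> nat \<Rightarrow> nat" where
  "C r m c = card {t. inc_tree r m t \<and> cadets t = c}"

lemma cadets_le: "inc_tree r m t \<Longrightarrow> cadets t \<le> r * m + 1"
proof -
  assume a: "inc_tree r m t"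
  then have f: "full r t" by (simp add: inc_tree_def)
  have "cadets t = card (cadpos r t)" using card_cadpos[OF f] by simp
  also have "\<dots> \<le> card (leafpos t)" by (rule card_mono[OF finite_leafpos cadpos_sub])
  also have "\<dots> = r * m + 1" using card_leafpos[OF f] inc_tree_len[OF a] by simp
  finally show ?thesis .
qed

lemma card_fiber:
  assumes "inc_tree r m t"
  shows "card {p \<in> leafpos t. cadets t + (if p \<in> cadpos r t then 0 else 1) = c}
     = (if cadets t = c then c else 0) + (if cadets t + 1 = c then r * m + 1 - cadets t else 0)"
proof -
  have f: "full r t" using assms by (simp add: inc_tree_def)
  show ?thesis
  proof (cases "cadets t = c")
    case True
    then have "{p \<in> leafpos t. cadets t + (if p \<in> cadpos r t then 0 else 1) = c} = cadpos r t"
      using cadpos_sub by auto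
    then show ?thesis using True card_cadpos[OF f] by simp
  next
    case False
    show ?thesis
    proof (cases "cadets t + 1 = c")
      case True
      then have "{p \<in> leafpos t. cadets t + (if p \<in> cadpos r t then 0 else 1) = c} = leafpos t - cadpos r t"
        using cadpos_sub by auto
      moreover have "card (leafpos t - cadpos r t) = r * m + 1 - cadets t"
        using card_Diff_subset[OF finite_cadpos cadpos_sub] card_cadpos[OF f] card_leafpos[OF f]
          inc_tree_len[OF assms] by simp
      ultimately show ?thesis using True False by simp
    next
      case False2: False
      then have "{p \<in> leafpos t. cadets t + (if p \<in> cadpos r t then 0 else 1) = c} = {}"
        using False by auto
      then show ?thesis using False False2 by simp
    qed
  qed
qed

lemma C_Suc_sum:
  "C r (Suc m) c = (\<Sum>t\<in>T r m. (if cadets t = c then c else 0) + (if cadets t + 1 = c then r * m + 1 - cadets t else 0))"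
proof -
  let ?F = "\<lambda>(t, p). repl p (Nd r (Suc m)) t"
  let ?S = "Sigma (T r m) (\<lambda>t. {p \<in> leafpos t. cadets t + (if p \<in> cadpos r t then 0 else 1) = c})"
  have eq: "{t. inc_tree r (Suc m) t \<and> cadets t = c} = ?F ` ?S"
  proof
    show "{t. inc_tree r (Suc m) t \<and> cadets t = c} \<subseteq> ?F ` ?S"
    proof
      fix t' assume "t' \<in> {t. inc_tree r (Suc m) t \<and> cadets t = c}"
      then have t': "inc_tree r (Suc m) t'" "cadets t' = c" by auto
      obtain t p where tp: "inc_tree r m t" "p \<in> leafpos t" "t' = repl p (Nd r (Suc m)) t"
        using bwd[OF t'(1)] by blast
      have "cadets t' = cadets t + (if p \<in> cadpos r t then 0 else 1)"
        using cadets_repl[OF Nd_props(4,5)] tp by (auto simp: inc_tree_def leafpos_def)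
      then have "(t, p) \<in> ?S" using tp t' by (auto simp: T_def)
      then show "t' \<in> ?F ` ?S" using tp by force
    qed
  next
    show "?F ` ?S \<subseteq> {t. inc_tree r (Suc m) t \<and> cadets t = c}"
    proof (rule subsetI)
      fix x assume "x \<in> ?F ` ?S"
      then obtain t p where a: "t \<in> T r m" "p \<in> leafpos t" "cadets t + (if p \<in> cadpos r t then 0 else 1) = c"
        and x: "x = repl p (Nd r (Suc m)) t" by auto
      have "cadets (repl p (Nd r (Suc m)) t) = cadets t + (if p \<in> cadpos r t then 0 else 1)"
        using cadets_repl[OF Nd_props(4,5)] a by (auto simp: T_def inc_tree_def leafpos_def)
      then show "x \<in> {t. inc_tree r (Suc m) t \<and> cadets t = c}"
        using fwd a x by (auto simp: T_def)
    qed
  qed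
  have inj: "inj_on ?F ?S" by (rule inj_on_subset[OF inj_F]) auto
  have "C r (Suc m) c = card ?S" unfolding C_def eq by (rule card_image[OF inj])
  also have "\<dots> = (\<Sum>t\<in>T r m. card {p \<in> leafpos t. cadets t + (if p \<in> cadpos r t then 0 else 1) = c})"
    by (rule card_SigmaI) (auto intro: finite_T finite_subset[OF _ finite_leafpos])
  also have "\<dots> = (\<Sum>t\<in>T r m. (if cadets t = c then c else 0) + (if cadets t + 1 = c then r * m + 1 - cadets t else 0))"
    by (rule sum.cong) (auto simp: T_def card_fiber)
  finally show ?thesis .
qed

lemma sum_if_const:
  "finite A \<Longrightarrow> (\<Sum>t\<in>A. if P t then (k::int) else 0) = k * int (card {t \<in> A. P t})"
  by (simp add: sum.inter_filter[symmetric])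

lemma C_Suc:
  "int (C r (Suc m) c) = int c * int (C r m c) + (if c \<ge> 1 then (int (r * m + 1) - int (c - 1)) * int (C r m (c - 1)) else 0)"
proof -
  have fT: "finite (T r m)" by (rule finite_T)
  have "int (C r (Suc m) c) = (\<Sum>t\<in>T r m. int ((if cadets t = c then c else 0) + (if cadets t + 1 = c then r * m + 1 - cadets t else 0)))"
    unfolding C_Suc_sum by simp
  also have "\<dots> = (\<Sum>t\<in>T r m. (if cadets t = c then int c else 0) + (if cadets t + 1 = c then int (r * m + 1) - int (c - 1) else 0))"
  proof (rule sum.cong)
    fix t assume "t \<in> T r m"
    then have "cadets t \<le> r * m + 1" using cadets_le by (simp add: T_def)
    then show "int ((if cadets t = c then c else 0) + (if cadets t + 1 = c then r * m + 1 - cadets t else 0)) =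
      (if cadets t = c then int c else 0) + (if cadets t + 1 = c then int (r * m + 1) - int (c - 1) else 0)"
      by auto
  qed simp
  also have "\<dots> = int c * int (card {t \<in> T r m. cadets t = c}) + (int (r * m + 1) - int (c - 1)) * int (card {t \<in> T r m. cadets t + 1 = c})"
    by (simp add: sum.distrib sum_if_const[OF fT])
  also have "{t \<in> T r m. cadets t = c} = {t. inc_tree r m t \<and> cadets t = c}" by (auto simp: T_def)
  also have "int (card {t \<in> T r m. cadets t + 1 = c}) = (if c \<ge> 1 then int (C r m (c - 1)) else 0)"
  proof (cases "c \<ge> 1")
    case True
    then have "{t \<in> T r m. cadets t + 1 = c} = {t. inc_tree r m t \<and> cadets t = c - 1}" by (auto simp: T_def)
    then show ?thesis using True by (simp add: C_def)
  next
    case False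
    then have "{t \<in> T r m. cadets t + 1 = c} = {}" by auto
    then show ?thesis using False by simp
  qed
  finally show ?thesis by (simp add: C_def)
qed

definition cnt :: "nat \<Rightarrow> nat \<Rightarrow> int \<Rightarrow> int" where
  "cnt r n k = int (card {t. inc_tree r n t \<and> int (cadets t) = k + 1})"

lemma cnt_C: "cnt r n k = (if k + 1 \<ge> 0 then int (C r n (nat (k + 1))) else 0)"
proof (cases "k + 1 \<ge> 0")
  case True
  then have e: "\<And>x::nat. (int x = k + 1) = (x = nat (k + 1))" by auto
  have "{t. inc_tree r n t \<and> int (cadets t) = k + 1} = {t. inc_tree r n t \<and> cadets t = nat (k + 1)}"
    by (simp only: e)
  then show ?thesis using True by (simp add: cnt_def C_def)
next
  case False
  then have e: "\<And>x::nat. (int x = k + 1) = False" by auto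
  have "{t. inc_tree r n t \<and> int (cadets t) = k + 1} = {}"
    by (simp only: e) simp
  then show ?thesis using False by (simp add: cnt_def)
qed

lemma C_Suc_0: "C r (Suc m) 0 = 0"
  using C_Suc[of r m 0] by simp

lemma C_0: "C r 0 c = (if c = 0 then 1 else 0)"
proof -
  have i0: "inc_tree r 0 t \<longleftrightarrow> t = Leaf" for t
    by (cases t) (auto simp: inc_tree_def)
  have "{t. inc_tree r 0 t \<and> cadets t = c} = (if c = 0 then {Leaf} else {})"
    by (auto simp: i0)
  then show ?thesis by (simp add: C_def)
qed

lemma cnt_Suc:
  "cnt r (Suc m) k = (if k < 0 then 0 else (int (r * m + 1) - k) * cnt r m (k - 1) + (k + 1) * cnt r m k)"
proof (cases "k < 0")
  case True
  then show ?thesis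
    using C_Suc_0 by (cases "k = -1") (auto simp: cnt_C)
next
  case False
  define c where "c = nat (k + 1)"
  have c1: "c \<ge> 1" and ck: "int c = k + 1" using False by (auto simp: c_def)
  have "cnt r (Suc m) k = int (C r (Suc m) c)" using False by (simp add: cnt_C c_def)
  also have "\<dots> = int c * int (C r m c) + (int (r * m + 1) - int (c - 1)) * int (C r m (c - 1))"
    using C_Suc[of r m c] c1 by simp
  also have "int (C r m c) = cnt r m k" using False by (simp add: cnt_C c_def)
  also have "c - 1 = nat k" using False by (simp add: c_def nat_add_distrib)
  also have "int (C r m (nat k)) = cnt r m (k - 1)" using False by (simp add: cnt_C)
  finally show ?thesis using False ck by (simp add: algebra_simps)
qed

lemma cnt_0: "cnt r 0 k = (if k = -1 then 1 else 0)"
  by (simp add: cnt_C C_0)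

theorem mainTheorem3:
  fixes r n :: nat and k :: int
  assumes "r \<ge> 1" and "n \<ge> 1"
  shows "B r n k = int (card {t. inc_tree r n t \<and> int (cadets t) = k + 1})"
proof -
  have "\<forall>k. B r (Suc m) k = cnt r (Suc m) k" for m
  proof (induction m)
    case 0
    show ?case
    proof
      fix k
      show "B r (Suc 0) k = cnt r (Suc 0) k"
        by (simp add: cnt_Suc cnt_0 algebra_simps)
    qed
  next
    case (Suc m)
    show ?case
    proof
      fix k
      have "B r (Suc (Suc m)) k = (if k < 0 then 0 else
          (int r * int (Suc (Suc m)) - k + 1 - int r) * B r (Suc m) (k - 1) + (k + 1) * B r (Suc m) k)"
        by simp
      also have "\<dots> = (if k < 0 then 0 else
          (int (r * Suc m + 1) - k) * cnt r (Suc m) (k - 1) + (k + 1) * cnt r (Suc m) k)"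
      proof -
        have I1: "B r (Suc m) (k - 1) = cnt r (Suc m) (k - 1)" using Suc.IH by blast
        have I2: "B r (Suc m) k = cnt r (Suc m) k" using Suc.IH by blast
        show ?thesis unfolding I1 I2 by (simp add: algebra_simps)
      qed
      also have "\<dots> = cnt r (Suc (Suc m)) k" by (simp add: cnt_Suc)
      finally show "B r (Suc (Suc m)) k = cnt r (Suc (Suc m)) k" .
    qed
  qed
  moreover obtain m where "n = Suc m" using assms(2) by (cases n) auto
  ultimately show ?thesis by (simp add: cnt_def)
qed

end
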